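(* For every mad family $\mathcal A$ on $\omega$, $\omega^{\mathfrak t}$ is relatively countably compact in $\Psi(\mathcal A)^{\mathfrak t}$; consequently $\Psi(\mathcal A)$ is $(\mathfrak t,\omega^* )$-pseudocompact.
   Context: An almost disjoint family is an infinite family $\mathcal A$ of infinite subsets of $\omega$ with pairwise finite intersections; a mad family is a maximal one under inclusion. $\Psi(\mathcal A)=\mathcal A\cup\omega$, where points of $\omega$ are isolated and each $A\in\mathcal A$ has local base $\{\{A\}\cup(A\setminus n):n\in\omega\}$. $\mathfrak t$ is the tower number: the least $\kappa$ such that there is a $\subseteq^*$-decreasing family $\{A_\alpha:\alpha<\kappa\}$ of infinite subsets of $\omega$ with no infinite pseudo-intersection. A subset $Y$ of a space $Z$ is relatively countably compact in $Z$ if every countably infinite subset of $Y$ has an accumulation point in $Z$. $\omega^*$ is the set of free ultrafilters on $\omega$. For $p\in\omega^*$ and a sequence $(B_n)$ of subsets of $X$, $x$ is a $p$-limit of $(B_n)$ if $\{n:V\cap B_n\ne\emptyset\}\in p$ for every neighborhood $V$ of $x$. $X$ is $(\kappa,\omega^* )$-pseudocompact if for every family $\{(V^\alpha_n:n\in\omega):\alpha<\kappa\}$ of sequences of nonempty open subsets of $X$ there is $p\in\omega^*$ such that each $(V^\alpha_n:n\in\omega)$ has a $p$-limit point in $X$. *)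

theory Defs
  imports "HOL-Analysis.Analysis"
begin

definition almost_subset :: "nat set \<Rightarrow> nat set \<Rightarrow> bool" (infix \<open>\<subseteq>\<^sup>*\<close> 50)
  where "A \<subseteq>\<^sup>* B \<longleftrightarrow> finite (A - B)"

definition almost_disjoint_family :: "nat set set \<Rightarrow> bool"
  where "almost_disjoint_family \<A> \<longleftrightarrow>
           infinite \<A> \<and> (\<forall>A\<in>\<A>. infinite A) \<and>
           (\<forall>A\<in>\<A>. \<forall>B\<in>\<A>. A \<noteq> B \<longrightarrow> finite (A \<inter> B))"

definition mad_family :: "nat set set \<Rightarrow> bool"
  where "mad_family \<A> \<longleftrightarrow> almost_disjoint_family \<A> \<and>
           (\<forall>\<B>. almost_disjoint_family \<B> \<and> \<A> \<subseteq> \<B> \<longrightarrow> \<B> = \<A>)"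

text \<open>Points of Psi(A): Inl n for n in omega, Inr A for A in the family.\<close>
definition Psi_space :: "nat set set \<Rightarrow> (nat + nat set) topology"
  where "Psi_space \<A> = topology_generated_by
           ((\<lambda>n. {Inl n}) ` UNIV \<union>
            {insert (Inr A) (Inl ` (A - {..<n})) | A n. A \<in> \<A>})"

definition tower :: "'i rel \<Rightarrow> ('i \<Rightarrow> nat set) \<Rightarrow> bool"
  where "tower r A \<longleftrightarrow> Well_order r \<and> (\<forall>\<alpha>\<in>Field r. infinite (A \<alpha>)) \<and>
           (\<forall>\<alpha> \<beta>. (\<alpha>, \<beta>) \<in> r \<longrightarrow> A \<beta> \<subseteq>\<^sup>* A \<alpha>) \<and>
           \<not> (\<exists>B. infinite B \<and> (\<forall>\<alpha>\<in>Field r. B \<subseteq>\<^sup>* A \<alpha>))"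

text \<open>I has cardinality the tower number t: it carries a tower, and every
  tower (indexed in the same type) has length of cardinality at least |I|.\<close>
definition has_card_tower_number :: "'i set \<Rightarrow> bool"
  where "has_card_tower_number I \<longleftrightarrow>
           (\<exists>r A. tower r A \<and> Field r = I) \<and>
           (\<forall>(r :: 'i rel) A. tower r A \<longrightarrow> (\<exists>f. inj_on f I \<and> f ` I \<subseteq> Field r))"

definition rel_countably_compact :: "'a topology \<Rightarrow> 'a set \<Rightarrow> bool"
  where "rel_countably_compact Z Y \<longleftrightarrow> Y \<subseteq> topspace Z \<and>
           (\<forall>S. S \<subseteq> Y \<and> countable S \<and> infinite S \<longrightarrow> Z derived_set_of S \<noteq> {})"

definition free_ultrafilter :: "nat set set \<Rightarrow> bool"
  where "free_ultrafilter p \<longleftrightarrow> {} \<notin> p \<and> UNIV \<in> p \<and>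
           (\<forall>X Y. X \<in> p \<and> X \<subseteq> Y \<longrightarrow> Y \<in> p) \<and>
           (\<forall>X Y. X \<in> p \<and> Y \<in> p \<longrightarrow> X \<inter> Y \<in> p) \<and>
           (\<forall>X. X \<in> p \<or> - X \<in> p) \<and>
           (\<forall>X. finite X \<longrightarrow> X \<notin> p)"

definition is_p_limit :: "'a topology \<Rightarrow> nat set set \<Rightarrow> (nat \<Rightarrow> 'a set) \<Rightarrow> 'a \<Rightarrow> bool"
  where "is_p_limit X p B x \<longleftrightarrow> x \<in> topspace X \<and>
           (\<forall>V. openin X V \<and> x \<in> V \<longrightarrow> {n. V \<inter> B n \<noteq> {}} \<in> p)"

definition kappa_omega_star_pseudocompact :: "'i set \<Rightarrow> 'a topology \<Rightarrow> bool"
  where "kappa_omega_star_pseudocompact K X \<longleftrightarrow>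
           (\<forall>V :: 'i \<Rightarrow> nat \<Rightarrow> 'a set.
              (\<forall>\<alpha>\<in>K. \<forall>n. openin X (V \<alpha> n) \<and> V \<alpha> n \<noteq> {}) \<longrightarrow>
              (\<exists>p. free_ultrafilter p \<and> (\<forall>\<alpha>\<in>K. \<exists>x. is_p_limit X p (V \<alpha>) x)))"

end

theory Submission
  imports Defs
begin

lemma psi_topspace: "topspace (Psi_space \<A>) = range Inl \<union> Inr ` \<A>"
  unfolding Psi_space_def topology_generated_by_topspace by blast

lemma psi_open_Inl: "openin (Psi_space \<A>) {Inl k}"
  unfolding Psi_space_def openin_topology_generated_by_iff
  by (rule generate_topology_on.Basis) blast

lemma psi_open_nbhd:
  assumes "openin (Psi_space \<A>) U" "Inr A \<in> U"
  shows "\<exists>m. insert (Inr A) (Inl ` (A - {..<m})) \<subseteq> U"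
proof -
  have "generate_topology_on ((\<lambda>n. {Inl n}) ` UNIV \<union>
            {insert (Inr A) (Inl ` (A - {..<n})) | A n. A \<in> \<A>}) U"
    using assms(1) unfolding Psi_space_def openin_topology_generated_by_iff .
  then show ?thesis using assms(2)
  proof (induction arbitrary: A)
    case Empty
    then show ?case by simp
  next
    case (Int a b)
    then obtain m1 m2 where "insert (Inr A) (Inl ` (A - {..<m1})) \<subseteq> a"
      "insert (Inr A) (Inl ` (A - {..<m2})) \<subseteq> b" by (meson IntD1 IntD2)
    then have "insert (Inr A) (Inl ` (A - {..<max m1 m2})) \<subseteq> a \<inter> b"
      by (auto simp: image_subset_iff)
    then show ?case by blast
  next
    case (UN K)
    then obtain k where "k \<in> K" "Inr A \<in> k" by auto
    with UN obtain m where "insert (Inr A) (Inl ` (A - {..<m})) \<subseteq> k" by blast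
    with \<open>k \<in> K\<close> show ?case by blast
  next
    case (Basis s)
    then show ?case by auto
  qed
qed

lemma psi_open_nonempty:
  assumes "mad_family \<A>" "openin (Psi_space \<A>) U" "U \<noteq> {}"
  shows "\<exists>k. Inl k \<in> U"
proof -
  obtain y where y: "y \<in> U" using assms by auto
  have "y \<in> topspace (Psi_space \<A>)" using openin_subset[OF assms(2)] y by auto
  show ?thesis
  proof (cases y)
    case (Inl k) then show ?thesis using y by auto
  next
    case (Inr A)
    then have A: "A \<in> \<A>" using \<open>y \<in> topspace _\<close> psi_topspace by auto
    then have "infinite A" using assms(1) unfolding mad_family_def almost_disjoint_family_def by auto
    obtain m where m: "insert (Inr A) (Inl ` (A - {..<m})) \<subseteq> U"
      using psi_open_nbhd[OF assms(2)] y Inr by blast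
    have "infinite (A - {..<m})" using \<open>infinite A\<close> by auto
    then obtain a where "a \<in> A - {..<m}" by (metis finite.emptyI ex_in_conv)
    then show ?thesis using m by auto
  qed
qed

definition conv_along :: "nat set set \<Rightarrow> (nat \<Rightarrow> nat) \<Rightarrow> nat set \<Rightarrow> bool" where
  "conv_along \<A> h N \<longleftrightarrow> (\<exists>x\<in>topspace (Psi_space \<A>). \<forall>V. openin (Psi_space \<A>) V \<and> x \<in> V \<longrightarrow>
       finite {n\<in>N. Inl (h n) \<notin> V})"

lemma mad_step:
  assumes mad: "mad_family \<A>" and M: "infinite M"
  shows "\<exists>N \<subseteq> M. infinite N \<and> conv_along \<A> h N"
proof (cases "\<exists>k. infinite {n\<in>M. h n = k}")
  case True
  then obtain k where k: "infinite {n\<in>M. h n = k}" by blast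
  have cv: "conv_along \<A> h {n\<in>M. h n = k}"
    unfolding conv_along_def
  proof (rule bexI[of _ "Inl k"])
    show "Inl k \<in> topspace (Psi_space \<A>)" by (simp add: psi_topspace)
    show "\<forall>V. openin (Psi_space \<A>) V \<and> Inl k \<in> V \<longrightarrow> finite {n \<in> {n \<in> M. h n = k}. Inl (h n) \<notin> V}"
    proof (intro allI impI)
      fix V assume "openin (Psi_space \<A>) V \<and> Inl k \<in> V"
      then have "Inl k \<in> V" by blast
      then have "{n \<in> {n \<in> M. h n = k}. Inl (h n) \<notin> V} = {}" by blast
      then show "finite {n \<in> {n \<in> M. h n = k}. Inl (h n) \<notin> V}" by (metis finite.emptyI)
    qed
  qed
  have sub: "{n\<in>M. h n = k} \<subseteq> M" by blast
  show ?thesis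
    by (rule exI[where x="{n\<in>M. h n = k}"], intro conjI sub k cv)
next
  case False
  then have fin: "\<And>k. finite {n\<in>M. h n = k}" by blast
  have finlt: "finite {n\<in>M. h n < m}" for m
  proof -
    have "{n\<in>M. h n < m} = (\<Union>k<m. {n\<in>M. h n = k})" by auto
    then show ?thesis using fin by simp
  qed
  have inf_img: "infinite (h ` M)"
  proof
    assume "finite (h ` M)"
    moreover have "M \<subseteq> (\<Union>k\<in>h ` M. {n\<in>M. h n = k})" by auto
    ultimately show False using fin M by (meson finite_UN_I finite_subset)
  qed
  have ad: "almost_disjoint_family \<A>" using mad unfolding mad_family_def by auto
  have "\<exists>A\<in>\<A>. infinite (A \<inter> h ` M)"
  proof (rule ccontr)
    assume nex: "\<not> ?thesis"
    have "almost_disjoint_family (insert (h ` M) \<A>)"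
      using ad nex inf_img unfolding almost_disjoint_family_def
      by (auto simp: Int_commute)
    then have "insert (h ` M) \<A> = \<A>" using mad unfolding mad_family_def by blast
    then have "h ` M \<in> \<A>" by blast
    with nex inf_img show False by auto
  qed
  then obtain A where A: "A \<in> \<A>" "infinite (A \<inter> h ` M)" by blast
  define N where "N = {n\<in>M. h n \<in> A}"
  have "h ` N = A \<inter> h ` M" unfolding N_def by auto
  then have infN: "infinite N" using A(2) by (metis finite_imageI)
  have "conv_along \<A> h N"
    unfolding conv_along_def
  proof (rule bexI[of _ "Inr A"])
    show "Inr A \<in> topspace (Psi_space \<A>)" using A by (simp add: psi_topspace)
    show "\<forall>V. openin (Psi_space \<A>) V \<and> Inr A \<in> V \<longrightarrow> finite {n \<in> N. Inl (h n) \<notin> V}"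
    proof (intro allI impI)
      fix V assume V: "openin (Psi_space \<A>) V \<and> Inr A \<in> V"
      then obtain m where m: "insert (Inr A) (Inl ` (A - {..<m})) \<subseteq> V"
        using psi_open_nbhd by blast
      have "{n \<in> N. Inl (h n) \<notin> V} \<subseteq> {n\<in>M. h n < m}" using m unfolding N_def by auto
      then show "finite {n \<in> N. Inl (h n) \<notin> V}" using finlt by (meson finite_subset)
    qed
  qed
  then show ?thesis
    by (intro exI[where x=N]) (use infN in \<open>auto simp: N_def\<close>)
qed


lemma asub_trans: "A \<subseteq>\<^sup>* B \<Longrightarrow> B \<subseteq>\<^sup>* C \<Longrightarrow> A \<subseteq>\<^sup>* C"
  unfolding almost_subset_def
  by (rule finite_subset[of _ "(A - B) \<union> (B - C)"]) auto

lemma asub_refl: "A \<subseteq>\<^sup>* A"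
  unfolding almost_subset_def by simp

lemma pseudo_int:
  assumes tn: "has_card_tower_number (T :: 'i set)" and a: "a \<in> T"
    and IH: "\<forall>b\<in>underS (card_of T) a. infinite (N b) \<and> (\<forall>c\<in>underS (card_of T) b. N b \<subseteq>\<^sup>* N c)"
  shows "\<exists>M. infinite M \<and> (\<forall>b\<in>underS (card_of T) a. M \<subseteq>\<^sup>* N b)"
proof (rule ccontr)
  assume nex: "\<not> ?thesis"
  let ?U = "underS (card_of T) a"
  let ?r = "Restr (card_of T) ?U"
  have WO: "Well_order (card_of T)" by (rule card_of_Well_order)
  have Fr: "Field ?r = ?U"
    by (rule Refl_Field_Restr2) (use WO Order_Relation.underS_Field[of "(card_of T)" a] in \<open>auto simp: order_on_defs\<close>)
  have "tower ?r N"
    unfolding tower_def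
  proof (intro conjI)
    show "Well_order ?r" using WO by (rule Well_order_Restr)
    show "\<forall>\<alpha>\<in>Field ?r. infinite (N \<alpha>)" using IH Fr by auto
    show "\<forall>\<alpha> \<beta>. (\<alpha>, \<beta>) \<in> ?r \<longrightarrow> N \<beta> \<subseteq>\<^sup>* N \<alpha>"
    proof (intro allI impI)
      fix x y assume xy: "(x, y) \<in> ?r"
      show "N y \<subseteq>\<^sup>* N x"
      proof (cases "x = y")
        case True then show ?thesis by (simp add: asub_refl)
      next
        case False
        then have "x \<in> underS (card_of T) y" "y \<in> ?U" using xy by (auto simp: underS_def)
        then show ?thesis using IH by blast
      qed
    qed
    show "\<not> (\<exists>B. infinite B \<and> (\<forall>\<alpha>\<in>Field ?r. B \<subseteq>\<^sup>* N \<alpha>))" using nex Fr by simp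
  qed
  then obtain f where "inj_on f T" "f ` T \<subseteq> Field ?r"
    using tn unfolding has_card_tower_number_def by blast
  then have "(card_of T, card_of ?U) \<in> ordLeq" using Fr card_of_ordLeq by metis
  moreover have "(card_of ?U, card_of T) \<in> ordLess"
    using card_of_underS[OF card_of_Card_order, of a T] a by (simp add: Field_card_of)
  ultimately show False using not_ordLess_ordLeq by blast
qed

lemma construct:
  assumes mad: "mad_family \<A>" and tn: "has_card_tower_number (T :: 'i set)"
  shows "\<exists>N. \<forall>a\<in>T. infinite (N a) \<and> conv_along \<A> (h a) (N a) \<and>
               (\<forall>b\<in>underS (card_of T) a. N a \<subseteq>\<^sup>* N b)"
proof -
  let ?r = "(card_of T)"
  have wo: "wo_rel ?r" unfolding wo_rel_def by (rule card_of_Well_order)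
  define H where "H = (\<lambda>(f :: 'i \<Rightarrow> nat set) a. SOME X. infinite X \<and> conv_along \<A> (h a) X \<and>
               (\<forall>b\<in>underS ?r a. X \<subseteq>\<^sup>* f b))"
  have adm: "wo_rel.adm_wo ?r H"
    unfolding wo_rel.adm_wo_def[OF wo] H_def
  proof (intro allI impI)
    fix f g :: "'i \<Rightarrow> nat set" and x
    assume "\<forall>y\<in>underS ?r x. f y = g y"
    then have "(\<forall>b\<in>underS ?r x. X \<subseteq>\<^sup>* f b) = (\<forall>b\<in>underS ?r x. X \<subseteq>\<^sup>* g b)" for X
      by simp
    then show "(SOME X. infinite X \<and> conv_along \<A> (h x) X \<and> (\<forall>b\<in>underS ?r x. X \<subseteq>\<^sup>* f b)) =
               (SOME X. infinite X \<and> conv_along \<A> (h x) X \<and> (\<forall>b\<in>underS ?r x. X \<subseteq>\<^sup>* g b))"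
      by simp
  qed
  define N where "N = wo_rel.worec ?r H"
  have fx: "N = H N" unfolding N_def using wo_rel.worec_fixpoint[OF wo adm] .
  have main: "a \<in> T \<longrightarrow> infinite (N a) \<and> conv_along \<A> (h a) (N a) \<and>
               (\<forall>b\<in>underS ?r a. N a \<subseteq>\<^sup>* N b)" for a
  proof (induction a rule: wo_rel.well_order_induct[OF wo])
    case (1 a)
    show ?case
    proof
      assume aT: "a \<in> T"
      have IH: "\<forall>b\<in>underS ?r a. infinite (N b) \<and> (\<forall>c\<in>underS ?r b. N b \<subseteq>\<^sup>* N c)"
      proof
        fix b assume b: "b \<in> underS ?r a"
        then have "b \<in> T" using Order_Relation.underS_Field[of ?r a] by (auto simp: Field_card_of)
        then show "infinite (N b) \<and> (\<forall>c\<in>underS ?r b. N b \<subseteq>\<^sup>* N c)"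
          using 1 b by (auto simp: underS_def)
      qed
      obtain M where M: "infinite M" "\<forall>b\<in>underS ?r a. M \<subseteq>\<^sup>* N b"
        using pseudo_int[OF tn aT IH] by blast
      obtain X where X: "X \<subseteq> M" "infinite X" "conv_along \<A> (h a) X"
        using mad_step[OF mad M(1)] by blast
      have "X \<subseteq>\<^sup>* M" using X(1) unfolding almost_subset_def by (metis Diff_eq_empty_iff finite.emptyI)
      then have "\<forall>b\<in>underS ?r a. X \<subseteq>\<^sup>* N b" using M(2) asub_trans by blast
      then have ex: "\<exists>X. infinite X \<and> conv_along \<A> (h a) X \<and> (\<forall>b\<in>underS ?r a. X \<subseteq>\<^sup>* N b)"
        using X by blast
      have "N a = H N a" using fx by (metis)
      also have "\<dots> = (SOME X. infinite X \<and> conv_along \<A> (h a) X \<and> (\<forall>b\<in>underS ?r a. X \<subseteq>\<^sup>* N b))"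
        unfolding H_def by simp
      finally show "infinite (N a) \<and> conv_along \<A> (h a) (N a) \<and> (\<forall>b\<in>underS ?r a. N a \<subseteq>\<^sup>* N b)"
        using someI_ex[OF ex] by simp
    qed
  qed
  show ?thesis using main by blast
qed

lemma fip:
  assumes tn: "has_card_tower_number (T :: 'i set)"
    and N: "\<forall>a\<in>T. infinite (N a) \<and> (\<forall>b\<in>underS (card_of T) a. N a \<subseteq>\<^sup>* N b)"
  shows "\<forall>D. D \<subseteq> N ` T \<and> finite D \<longrightarrow> infinite (\<Inter>D)"
proof (intro allI impI)
  fix D assume D: "D \<subseteq> N ` T \<and> finite D"
  then obtain E where E: "E \<subseteq> T" "finite E" "D = N ` E"
    by (meson finite_subset_image)
  show "infinite (\<Inter>D)"
  proof (cases "E = {}")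
    case True then show ?thesis using E by simp
  next
    case False
    have tot: "\<forall>x\<in>T. \<forall>y\<in>T. (x, y) \<in> (card_of T) \<or> (y, x) \<in> (card_of T)"
      using wo_rel.TOTALS[of "(card_of T)"] card_of_Well_order[of T] by (simp add: wo_rel_def Field_card_of)
    have "\<exists>m\<in>E. \<forall>b\<in>E. N m \<subseteq>\<^sup>* N b"
      using E(2) False E(1)
    proof (induction E rule: finite_ne_induct)
      case (singleton x) then show ?case by (simp add: asub_refl)
    next
      case (insert x F)
      then obtain m where m: "m \<in> F" "\<forall>b\<in>F. N m \<subseteq>\<^sup>* N b" by auto
      have xT: "x \<in> T" "m \<in> T" using insert m by auto
      show ?case
      proof (cases "x = m")
        case True then show ?thesis using m by (auto simp: asub_refl)
      next
        case False
        from tot xT consider "(x, m) \<in> (card_of T)" | "(m, x) \<in> (card_of T)" by blast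
        then show ?thesis
        proof cases
          case 1
          then have "x \<in> underS (card_of T) m" using False by (auto simp: underS_def)
          then have "N m \<subseteq>\<^sup>* N x" using N xT by blast
          then show ?thesis using m by auto
        next
          case 2
          then have "m \<in> underS (card_of T) x" using False by (auto simp: underS_def)
          then have "N x \<subseteq>\<^sup>* N m" using N xT by blast
          then show ?thesis using m asub_trans by (auto simp: asub_refl)
        qed
      qed
    qed
    then obtain m where m: "m \<in> E" "\<forall>b\<in>E. N m \<subseteq>\<^sup>* N b" by blast
    have "N m - \<Inter>D \<subseteq> (\<Union>b\<in>E. N m - N b)" using E(3) by auto
    moreover have "finite (\<Union>b\<in>E. N m - N b)" using m E(2) unfolding almost_subset_def
      by (intro finite_UN_I) auto
    ultimately have "finite (N m - \<Inter>D)" by (rule finite_subset)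
    moreover have "infinite (N m)" using N m E(1) by auto
    ultimately show ?thesis by (meson Diff_infinite_finite)
  qed
qed


lemma uf_exists:
  assumes G: "\<forall>D. D \<subseteq> G \<and> finite D \<longrightarrow> infinite (\<Inter>D)"
  shows "\<exists>p. free_ultrafilter p \<and> G \<subseteq> p"
proof -
  define A where "A = {Q. G \<subseteq> Q \<and> (\<forall>D. D \<subseteq> Q \<and> finite D \<longrightarrow> infinite (\<Inter>D))}"
  have GA: "G \<in> A" using G unfolding A_def by blast
  have "\<forall>C\<in>chains A. \<exists>U\<in>A. \<forall>X\<in>C. X \<subseteq> U"
  proof
    fix C assume C: "C \<in> chains A"
    show "\<exists>U\<in>A. \<forall>X\<in>C. X \<subseteq> U"
    proof (cases "C = {}")
      case True then show ?thesis using GA by blast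
    next
      case False
      have CA: "C \<subseteq> A" and ch: "subset.chain UNIV C"
        using C unfolding chains_def chain_subset_alt_def by auto
      have "\<Union>C \<in> A"
        unfolding A_def
      proof (intro CollectI conjI allI impI)
        show "G \<subseteq> \<Union>C" using False CA unfolding A_def by blast
        fix D assume D: "D \<subseteq> \<Union>C \<and> finite D"
        then obtain B where "B \<in> C" "D \<subseteq> B"
          using finite_subset_Union_chain[OF _ _ False ch] by blast
        then show "infinite (\<Inter>D)" using CA D unfolding A_def by blast
      qed
      then show ?thesis by blast
    qed
  qed
  from Zorn_Lemma2[OF this] obtain M where M: "M \<in> A" and max: "\<forall>X\<in>A. M \<subseteq> X \<longrightarrow> X = M"
    by blast
  have GM: "G \<subseteq> M" and fipM: "\<And>D. D \<subseteq> M \<Longrightarrow> finite D \<Longrightarrow> infinite (\<Inter>D)"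
    using M unfolding A_def by auto
  have ins: "X \<in> M" if "\<And>D. D \<subseteq> M \<Longrightarrow> finite D \<Longrightarrow> infinite (\<Inter>(insert X D))" for X
  proof -
    have "insert X M \<in> A"
      unfolding A_def
    proof (intro CollectI conjI allI impI)
      show "G \<subseteq> insert X M" using GM by blast
      fix D assume D: "D \<subseteq> insert X M \<and> finite D"
      have "infinite (\<Inter>(insert X (D - {X})))" using that[of "D - {X}"] D by blast
      moreover have "\<Inter>(insert X (D - {X})) \<subseteq> \<Inter>D" by blast
      ultimately show "infinite (\<Inter>D)" using finite_subset by blast
    qed
    then show ?thesis using max by blast
  qed
  have up: "Y \<in> M" if "X \<in> M" "X \<subseteq> Y" for X Y
  proof (rule ins)
    fix D assume "D \<subseteq> M" "finite D"
    then have "infinite (\<Inter>(insert X D))" using fipM[of "insert X D"] that by auto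
    moreover have "\<Inter>(insert X D) \<subseteq> \<Inter>(insert Y D)" using that by auto
    ultimately show "infinite (\<Inter>(insert Y D))" using finite_subset by blast
  qed
  have int: "X \<inter> Y \<in> M" if "X \<in> M" "Y \<in> M" for X Y
  proof (rule ins)
    fix D assume "D \<subseteq> M" "finite D"
    then have "infinite (\<Inter>(insert X (insert Y D)))" using fipM[of "insert X (insert Y D)"] that by auto
    moreover have "\<Inter>(insert X (insert Y D)) = \<Inter>(insert (X \<inter> Y) D)" by auto
    ultimately show "infinite (\<Inter>(insert (X \<inter> Y) D))" by simp
  qed
  have univ: "UNIV \<in> M"
  proof (rule ins)
    fix D assume "D \<subseteq> M" "finite D"
    then show "infinite (\<Inter>(insert UNIV D))" using fipM by simp
  qed
  have empty: "{} \<notin> M" using fipM[of "{{}}"] by auto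
  have fin: "X \<notin> M" if "finite X" for X using fipM[of "{X}"] that by auto
  have compl: "X \<in> M \<or> - X \<in> M" for X
  proof (rule ccontr)
    assume "\<not> ?thesis"
    then have n1: "X \<notin> M" and n2: "- X \<notin> M" by auto
    obtain D1 where D1: "D1 \<subseteq> M" "finite D1" "finite (\<Inter>(insert X D1))"
      using n1 ins by blast
    obtain D2 where D2: "D2 \<subseteq> M" "finite D2" "finite (\<Inter>(insert (- X) D2))"
      using n2 ins by blast
    have "\<Inter>(D1 \<union> D2) \<subseteq> \<Inter>(insert X D1) \<union> \<Inter>(insert (- X) D2)" by auto
    then have "finite (\<Inter>(D1 \<union> D2))" using D1(3) D2(3) by (meson finite_UnI finite_subset)
    moreover have "infinite (\<Inter>(D1 \<union> D2))" using fipM D1 D2 by simp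
    ultimately show False by blast
  qed
  have "free_ultrafilter M"
    unfolding free_ultrafilter_def
  proof (intro conjI allI impI)
    show "{} \<notin> M" by (rule empty)
    show "UNIV \<in> M" by (rule univ)
    show "Y \<in> M" if "X \<in> M \<and> X \<subseteq> Y" for X Y using up that by blast
    show "X \<inter> Y \<in> M" if "X \<in> M \<and> Y \<in> M" for X Y using int that by blast
    show "X \<in> M \<or> - X \<in> M" for X by (rule compl)
    show "X \<notin> M" if "finite X" for X using fin that by blast
  qed
  then show ?thesis using GM by blast
qed

lemma uf_up: assumes "free_ultrafilter p" "X \<in> p" "X \<subseteq> Y" shows "Y \<in> p"
proof -
  have "\<forall>X Y. X \<in> p \<and> X \<subseteq> Y \<longrightarrow> Y \<in> p" using assms(1) unfolding free_ultrafilter_def by (elim conjE)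
  then show ?thesis using assms(2,3) by blast
qed

lemma uf_int: assumes "free_ultrafilter p" "X \<in> p" "Y \<in> p" shows "X \<inter> Y \<in> p"
proof -
  have "\<forall>X Y. X \<in> p \<and> Y \<in> p \<longrightarrow> X \<inter> Y \<in> p" using assms(1) unfolding free_ultrafilter_def by (elim conjE)
  then show ?thesis using assms(2,3) by blast
qed

lemma uf_cofin: assumes "free_ultrafilter p" "finite E" shows "- E \<in> p"
proof -
  have "\<forall>X. X \<in> p \<or> - X \<in> p" using assms(1) unfolding free_ultrafilter_def by (elim conjE)
  moreover have "\<forall>X. finite X \<longrightarrow> X \<notin> p" using assms(1) unfolding free_ultrafilter_def by (elim conjE)
  ultimately have "\<forall>X. finite X \<longrightarrow> - X \<in> p" by blast
  then show ?thesis using assms(2) by blast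
qed

lemma uf_INT: assumes "free_ultrafilter p" "finite J" "\<forall>j\<in>J. Q j \<in> p" shows "(\<Inter>j\<in>J. Q j) \<in> p"
  using assms(2,3)
proof (induction J rule: finite_induct)
  case empty then show ?case using assms(1) unfolding free_ultrafilter_def by simp
next
  case (insert x F) then show ?case using assms(1) uf_int[of p "Q x" "\<Inter>j\<in>F. Q j"] by simp
qed

lemma uf_infinite: assumes "free_ultrafilter p" "X \<in> p" shows "infinite X"
proof -
  have "\<forall>X. finite X \<longrightarrow> X \<notin> p" using assms(1) unfolding free_ultrafilter_def by (elim conjE)
  then show ?thesis using assms(2) by blast
qed

lemma core:
  assumes mad: "mad_family \<A>" and tn: "has_card_tower_number (T :: 'i set)"
  shows "\<exists>p. free_ultrafilter p \<and> (\<forall>a\<in>T. \<exists>x\<in>topspace (Psi_space \<A>).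
            \<forall>V. openin (Psi_space \<A>) V \<and> x \<in> V \<longrightarrow> {n. Inl (h a n) \<in> V} \<in> p)"
proof -
  obtain N where N: "\<forall>a\<in>T. infinite (N a) \<and> conv_along \<A> (h a) (N a) \<and>
               (\<forall>b\<in>underS (card_of T) a. N a \<subseteq>\<^sup>* N b)"
    using construct[OF mad tn] by blast
  have "\<forall>D. D \<subseteq> N ` T \<and> finite D \<longrightarrow> infinite (\<Inter>D)"
    by (rule fip[OF tn]) (use N in blast)
  then obtain p where p: "free_ultrafilter p" "N ` T \<subseteq> p" using uf_exists by blast
  have "\<forall>a\<in>T. \<exists>x\<in>topspace (Psi_space \<A>).
            \<forall>V. openin (Psi_space \<A>) V \<and> x \<in> V \<longrightarrow> {n. Inl (h a n) \<in> V} \<in> p"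
  proof
    fix a assume a: "a \<in> T"
    then obtain x where x: "x \<in> topspace (Psi_space \<A>)"
      "\<forall>V. openin (Psi_space \<A>) V \<and> x \<in> V \<longrightarrow> finite {n\<in>N a. Inl (h a n) \<notin> V}"
      using N unfolding conv_along_def by blast
    show "\<exists>x\<in>topspace (Psi_space \<A>).
            \<forall>V. openin (Psi_space \<A>) V \<and> x \<in> V \<longrightarrow> {n. Inl (h a n) \<in> V} \<in> p"
    proof (intro bexI[OF _ x(1)] allI impI)
      fix V assume V: "openin (Psi_space \<A>) V \<and> x \<in> V"
      have "- {n\<in>N a. Inl (h a n) \<notin> V} \<in> p" using x(2) V uf_cofin[OF p(1)] by blast
      moreover have "N a \<in> p" using p(2) a by blast
      ultimately have "N a \<inter> - {n\<in>N a. Inl (h a n) \<notin> V} \<in> p" using uf_int[OF p(1)] by blast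
      moreover have "N a \<inter> - {n\<in>N a. Inl (h a n) \<notin> V} \<subseteq> {n. Inl (h a n) \<in> V}" by blast
      ultimately show "{n. Inl (h a n) \<in> V} \<in> p" using uf_up[OF p(1)] by blast
    qed
  qed
  then show ?thesis using p(1) by blast
qed


theorem lemma3p7:
  fixes \<A> :: "nat set set" and T :: "'i set"
  assumes "mad_family \<A>"
    and "has_card_tower_number T"
  shows "rel_countably_compact (product_topology (\<lambda>_. Psi_space \<A>) T)
           (PiE T (\<lambda>_. range Inl))
         \<and> kappa_omega_star_pseudocompact T (Psi_space \<A>)"
proof
  let ?P = "Psi_space \<A>"
  let ?Z = "product_topology (\<lambda>_. ?P) T"
  let ?Y = "PiE T (\<lambda>_. range Inl) :: ('i \<Rightarrow> nat + nat set) set"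
  show "rel_countably_compact ?Z ?Y"
    unfolding rel_countably_compact_def
  proof (intro conjI allI impI)
    show sub: "?Y \<subseteq> topspace ?Z"
      by (auto simp: topspace_product_topology psi_topspace PiE_def Pi_def)
    fix S assume S: "S \<subseteq> ?Y \<and> countable S \<and> infinite S"
    then obtain s where s: "bij_betw s (UNIV :: nat set) S"
      using countable_infiniteE' by blast
    define h where "h = (\<lambda>a n. projl (s n a))"
    have sn: "s n a = Inl (h a n)" if "a \<in> T" for a n
    proof -
      have "s n \<in> S" using s bij_betwE by blast
      then have "s n a \<in> range Inl" using S that by (auto simp: PiE_def Pi_def)
      then show ?thesis unfolding h_def by auto
    qed
    obtain p where p: "free_ultrafilter p" and
      lim: "\<forall>a\<in>T. \<exists>x\<in>topspace ?P. \<forall>V. openin ?P V \<and> x \<in> V \<longrightarrow> {n. Inl (h a n) \<in> V} \<in> p"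
      using core[OF assms, of h] by blast
    then obtain g where g: "\<forall>a\<in>T. g a \<in> topspace ?P \<and>
        (\<forall>V. openin ?P V \<and> g a \<in> V \<longrightarrow> {n. Inl (h a n) \<in> V} \<in> p)"
      by metis
    define x where "x = restrict g T"
    have xZ: "x \<in> topspace ?Z" using g by (auto simp: x_def topspace_product_topology)
    have "x \<in> ?Z derived_set_of S"
      unfolding derived_set_of_def
    proof (intro CollectI conjI xZ allI impI)
      fix U assume U: "x \<in> U \<and> openin ?Z U"
      then obtain W where W: "finite {i \<in> T. W i \<noteq> topspace ?P}" "\<forall>i\<in>T. openin ?P (W i)"
        "x \<in> PiE T W" "PiE T W \<subseteq> U"
        unfolding openin_product_topology_alt by blast
      define J where "J = {i \<in> T. W i \<noteq> topspace ?P}"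
      define Q where "Q = (\<Inter>j\<in>J. {n. Inl (h j n) \<in> W j})"
      have "Q \<in> p" unfolding Q_def
      proof (rule uf_INT[OF p])
        show "finite J" using W(1) J_def by simp
        show "\<forall>j\<in>J. {n. Inl (h j n) \<in> W j} \<in> p"
        proof
          fix j assume j: "j \<in> J"
          then have jT: "j \<in> T" unfolding J_def by blast
          have "g j \<in> W j" using W(3) jT by (auto simp: x_def PiE_def Pi_def)
          then show "{n. Inl (h j n) \<in> W j} \<in> p" using g W(2) jT by blast
        qed
      qed
      then have Qinf: "infinite Q" using uf_infinite[OF p] by blast
      have inQ: "s n \<in> PiE T W" if "n \<in> Q" for n
      proof -
        have "s n \<in> S" using s bij_betwE by blast
        then have ext: "s n \<in> extensional T" using S by (auto simp: PiE_def)
        have "s n i \<in> W i" if "i \<in> T" for i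
        proof (cases "i \<in> J")
          case True then show ?thesis using \<open>n \<in> Q\<close> sn[OF that] unfolding Q_def by auto
        next
          case False
          then have "W i = topspace ?P" using that unfolding J_def by blast
          then show ?thesis using sn[OF that] by (simp add: psi_topspace)
        qed
        then show ?thesis using ext by (auto simp: PiE_def Pi_def)
      qed
      have "finite {n. s n = x}"
      proof (rule inj_on_finite[of s _ "{x}"])
        show "inj_on s {n. s n = x}" using s by (auto simp: bij_betw_def inj_on_def)
      qed auto
      then have "infinite (Q - {n. s n = x})" using Qinf by (meson Diff_infinite_finite)
      then have "Q - {n. s n = x} \<noteq> {}" by (metis finite.emptyI)
      then obtain n where n0: "n \<in> Q - {n. s n = x}" by blast
      then have n: "n \<in> Q" "s n \<noteq> x" by auto
      show "\<exists>y. y \<noteq> x \<and> y \<in> S \<and> y \<in> U"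
        using n inQ[OF n(1)] W(4) s bij_betwE by blast
    qed
    then show "?Z derived_set_of S \<noteq> {}" by blast
  qed
  show "kappa_omega_star_pseudocompact T ?P"
    unfolding kappa_omega_star_pseudocompact_def
  proof (intro allI impI)
    fix V :: "'i \<Rightarrow> nat \<Rightarrow> (nat + nat set) set"
    assume V: "\<forall>\<alpha>\<in>T. \<forall>n. openin ?P (V \<alpha> n) \<and> V \<alpha> n \<noteq> {}"
    define h where "h = (\<lambda>a n. SOME k. Inl k \<in> V a n)"
    have hV: "Inl (h a n) \<in> V a n" if "a \<in> T" for a n
    proof -
      have "openin ?P (V a n)" "V a n \<noteq> {}" using V that by auto
      then have "\<exists>k. Inl k \<in> V a n" by (rule psi_open_nonempty[OF assms(1)])
      then show ?thesis unfolding h_def by (rule someI_ex)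
    qed
    obtain p where p: "free_ultrafilter p" and
      lim: "\<forall>a\<in>T. \<exists>x\<in>topspace ?P. \<forall>W. openin ?P W \<and> x \<in> W \<longrightarrow> {n. Inl (h a n) \<in> W} \<in> p"
      using core[OF assms, of h] by blast
    have "\<forall>\<alpha>\<in>T. \<exists>x. is_p_limit ?P p (V \<alpha>) x"
    proof
      fix a assume a: "a \<in> T"
      then obtain x where x: "x \<in> topspace ?P"
        "\<forall>W. openin ?P W \<and> x \<in> W \<longrightarrow> {n. Inl (h a n) \<in> W} \<in> p" using lim by blast
      have "is_p_limit ?P p (V a) x"
        unfolding is_p_limit_def
      proof (intro conjI x(1) allI impI)
        fix W assume W: "openin ?P W \<and> x \<in> W"
        have "{n. Inl (h a n) \<in> W} \<subseteq> {n. W \<inter> V a n \<noteq> {}}" using hV[OF a] by blast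
        then show "{n. W \<inter> V a n \<noteq> {}} \<in> p" using x(2) W uf_up[OF p] by blast
      qed
      then show "\<exists>x. is_p_limit ?P p (V a) x" by blast
    qed
    then show "\<exists>p. free_ultrafilter p \<and> (\<forall>\<alpha>\<in>T. \<exists>x. is_p_limit ?P p (V \<alpha>) x)"
      using p by blast
  qed
qed

end
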